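(* Let $1\le m<n$. (a) If $m=1$, then for every $A\in\mathbb R^{1\times n}$ and all $0<p,q\le\infty$: $\mathrm{pginv}_{\mathrm{col}(p,q)}(A)=\mathrm{ginv}_p(A)$; consequently there is a full-rank $A_1\in\mathbb R^{1\times n}$ with $A_1^\dagger\in\mathrm{pginv}_{\mathrm{col}(p,q)}(A_1)\iff p=2$ for $0<p<\infty$, $0<q\le\infty$. (b) If $m\ge 2$, there exists a full-rank $A_4\in\mathbb R^{m\times n}$ such that for all $1\le p<\infty$ and $0<q<\infty$: $A_4^\dagger\in\mathrm{pginv}_{\mathrm{col}(p,q)}(A_4)\iff p=2$.
   Context: Generalized inverses are taken real: $\mathcal G(A)=\{X\in\mathbb R^{n\times m}:AX=I_m\}$, $\mathrm{ginv}_\nu(A)=\arg\min_{X\in\mathcal G(A)}\|X\|_\nu$, $\mathrm{pginv}_\mu(A)=\arg\min_{X\in\mathcal G(A)}\|XA\|_\mu$ (sets). For $M$ with columns $m_j$, $\|M\|_{\mathrm{col}(p,q)}=(\sum_j\|m_j\|_p^q)^{1/q}$ (maximum for $q=\infty$); entrywise $\|M\|_p=\|\mathrm{vec}(M)\|_p$. $A^\dagger=A^\top(AA^\top)^{-1}$. *)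

theory Defs
  imports "HOL-Analysis.Analysis"
begin

text \<open>Matrices: an m x n real matrix is an element of real^'n^'m (rows indexed by 'm).\<close>

definition vnorm :: "ereal \<Rightarrow> real^'k \<Rightarrow> real" where
  "vnorm p x = (if p = \<infinity> then Max (range (\<lambda>i. \<bar>x $ i\<bar>))
      else (\<Sum>i\<in>UNIV. \<bar>x $ i\<bar> powr real_of_ereal p) powr (1 / real_of_ereal p))"

definition colnorm :: "ereal \<Rightarrow> ereal \<Rightarrow> real^'c^'r \<Rightarrow> real" where
  "colnorm p q M = (if q = \<infinity> then Max (range (\<lambda>j. vnorm p (column j M)))
      else (\<Sum>j\<in>UNIV. vnorm p (column j M) powr real_of_ereal q) powr (1 / real_of_ereal q))"

definition entnorm :: "ereal \<Rightarrow> real^'c^'r \<Rightarrow> real" where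
  "entnorm p M = (if p = \<infinity> then Max (range (\<lambda>(i,j). \<bar>M $ i $ j\<bar>))
      else (\<Sum>(i,j)\<in>UNIV. \<bar>M $ i $ j\<bar> powr real_of_ereal p) powr (1 / real_of_ereal p))"

definition ginvs :: "real^'n^'m \<Rightarrow> (real^'m^'n) set" where
  "ginvs A = {X. A ** X = mat 1}"

definition ginv :: "(real^'m^'n \<Rightarrow> real) \<Rightarrow> real^'n^'m \<Rightarrow> (real^'m^'n) set" where
  "ginv nu A = {X \<in> ginvs A. \<forall>Y \<in> ginvs A. nu X \<le> nu Y}"

definition pginv :: "(real^'n^'n \<Rightarrow> real) \<Rightarrow> real^'n^'m \<Rightarrow> (real^'m^'n) set" where
  "pginv mu A = {X \<in> ginvs A. \<forall>Y \<in> ginvs A. mu (X ** A) \<le> mu (Y ** A)}"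

text \<open>Moore-Penrose pseudoinverse for full row rank: A^T (A A^T)^{-1}.\<close>
definition pinv :: "real^'n^'m \<Rightarrow> real^'m^'n" where
  "pinv A = transpose A ** matrix_inv (A ** transpose A)"

end

theory Submission
  imports Defs
begin

lemma rp_pos: "0 < p \<Longrightarrow> p \<noteq> \<infinity> \<Longrightarrow> 0 < real_of_ereal p"
  by (cases p) auto

lemma vnorm_nonneg: "0 \<le> vnorm p x"
proof (cases "p = \<infinity>")
  case True
  have "\<bar>x $ i\<bar> \<le> Max (range (\<lambda>i. \<bar>x $ i\<bar>))" for i by (rule Max_ge) auto
  then have "0 \<le> Max (range (\<lambda>i. \<bar>x $ i\<bar>))" by (meson abs_ge_zero order_trans)
  then show ?thesis using True unfolding vnorm_def by simp
qed (simp add: vnorm_def)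

lemma Max_scale:
  fixes f :: "'a::finite \<Rightarrow> real"
  assumes "0 \<le> c"
  shows "Max (range (\<lambda>i. c * f i)) = c * Max (range f)"
proof -
  have "mono ((*) c)" using assms by (simp add: mono_def mult_left_mono)
  then have "(*) c (Max (range f)) = Max ((*) c ` range f)"
    by (intro mono_Max_commute) auto
  then show ?thesis by (simp add: image_image)
qed

lemma vnorm_scale:
  assumes "0 < p"
  shows "vnorm p (c *s x) = \<bar>c\<bar> * vnorm p x"
proof (cases "p = \<infinity>")
  case True
  then show ?thesis unfolding vnorm_def by (simp add: abs_mult Max_scale)
next
  case False
  define P where "P = real_of_ereal p"
  have P: "0 < P" using rp_pos[OF assms False] P_def by simp
  have "(\<Sum>i\<in>UNIV. \<bar>(c *s x) $ i\<bar> powr P) = \<bar>c\<bar> powr P * (\<Sum>i\<in>UNIV. \<bar>x $ i\<bar> powr P)"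
    by (simp add: abs_mult powr_mult sum_distrib_left)
  then have "vnorm p (c *s x) = (\<bar>c\<bar> powr P * (\<Sum>i\<in>UNIV. \<bar>x $ i\<bar> powr P)) powr (1/P)"
    using False unfolding vnorm_def P_def by simp
  also have "\<dots> = (\<bar>c\<bar> powr P) powr (1/P) * (\<Sum>i\<in>UNIV. \<bar>x $ i\<bar> powr P) powr (1/P)"
    by (rule powr_mult)
  also have "(\<bar>c\<bar> powr P) powr (1/P) = \<bar>c\<bar>" using P by (simp add: powr_powr)
  finally show ?thesis using False unfolding vnorm_def P_def by simp
qed

lemma vnorm_pos:
  assumes "0 < p" "x $ i \<noteq> 0"
  shows "0 < vnorm p x"
proof (cases "p = \<infinity>")
  case True
  have "\<bar>x $ i\<bar> \<le> Max (range (\<lambda>i. \<bar>x $ i\<bar>))" by (rule Max_ge) auto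
  moreover have "0 < \<bar>x $ i\<bar>" using assms by simp
  ultimately have "0 < Max (range (\<lambda>i. \<bar>x $ i\<bar>))" by linarith
  then show ?thesis using True unfolding vnorm_def by simp
next
  case False
  have "0 < (\<Sum>i\<in>UNIV. \<bar>x $ i\<bar> powr real_of_ereal p)"
    by (rule sum_pos2[of _ i]) (use assms in auto)
  then show ?thesis using False unfolding vnorm_def by simp
qed

lemma vnorm_abs: "vnorm p (\<chi> i. \<bar>x $ i\<bar>) = vnorm p x"
  by (simp add: vnorm_def)

lemma colnorm_vnorm: "colnorm p q M = vnorm q (\<chi> j. vnorm p (column j M))"
  by (simp add: colnorm_def vnorm_def[of q] abs_of_nonneg vnorm_nonneg)


lemma part_a:
  fixes A :: "real^'n^'m"
  assumes "CARD('m) = 1" "0 < p" "0 < q"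
  shows "pginv (colnorm p q) A = ginv (entnorm p) A"
proof -
  obtain i0 :: 'm where U: "UNIV = {i0}" using assms(1) card_1_singletonE by blast
  have ent: "entnorm p X = vnorm p (column i0 X)" for X :: "real^'m^'n"
  proof -
    have R: "range (\<lambda>(i,j). \<bar>X $ i $ j\<bar>) = range (\<lambda>i. \<bar>column i0 X $ i\<bar>)"
    proof -
      have b: "\<And>b::'m. b = i0" using U by blast
      show ?thesis by (auto simp: column_def image_iff) (metis b)
    qed
    have S: "(\<Sum>(i,j)\<in>UNIV. \<bar>X $ i $ j\<bar> powr r) = (\<Sum>i\<in>UNIV. \<bar>column i0 X $ i\<bar> powr r)" for r
      by (simp add: UNIV_Times_UNIV[symmetric] sum.cartesian_product[symmetric] U column_def del: UNIV_Times_UNIV)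
    show ?thesis unfolding entnorm_def vnorm_def R S ..
  qed
  define N where "N = vnorm q (row i0 A)"
  have col: "colnorm p q (X ** A) = vnorm p (column i0 X) * N" for X :: "real^'m^'n"
  proof -
    have "(\<chi> j. vnorm p (column j (X ** A))) = vnorm p (column i0 X) *s (\<chi> j. \<bar>row i0 A $ j\<bar>)"
    proof -
      have cj: "column j (X ** A) = (A $ i0 $ j) *s column i0 X" for j
        by (simp add: vec_eq_iff column_def matrix_matrix_mult_def U mult.commute)
      show ?thesis using assms(2) by (simp add: cj vec_eq_iff vnorm_scale mult.commute row_def)
    qed
    then show ?thesis unfolding colnorm_vnorm N_def
      using assms(3) by (simp add: vnorm_scale vnorm_nonneg vnorm_abs)
  qed
  have Npos: "0 < N" if "X \<in> ginvs A" for X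
  proof -
    have "(A ** X) $ i0 $ i0 = 1" using that by (simp add: ginvs_def mat_def)
    then have "A $ i0 \<noteq> 0" by (auto simp: matrix_matrix_mult_def)
    then obtain j where "A $ i0 $ j \<noteq> 0" by (auto simp: vec_eq_iff)
    then show ?thesis unfolding N_def using assms(3) by (intro vnorm_pos[of _ _ j]) (auto simp: row_def)
  qed
  show ?thesis
    unfolding pginv_def ginv_def col ent using Npos by auto
qed


lemma min_norm:
  fixes A :: "real^'n^'m"
  assumes "A ** P = mat 1" "P = transpose A ** W" "A *v z = u"
  shows "norm (P *v u) \<le> norm z"
proof -
  define e where "e = z - P *v u"
  have Ae: "A *v e = 0"
    using assms by (simp add: e_def matrix_vector_mult_diff_distrib matrix_vector_mul_assoc)
  have orth: "inner (P *v u) e = 0"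
  proof -
    have "P *v u = transpose A *v (W *v u)" using assms(2) by (simp add: matrix_vector_mul_assoc)
    then have "inner (P *v u) e = inner (W *v u) (A *v e)"
      by (simp add: dot_lmul_matrix)
    then show ?thesis using Ae by simp
  qed
  have "z = P *v u + e" by (simp add: e_def)
  then have "(norm z)^2 = (norm (P *v u))^2 + (norm e)^2"
    using orth by (simp add: power2_norm_eq_inner inner_add_left inner_add_right inner_commute)
  then have "(norm (P *v u))^2 \<le> (norm z)^2" by simp
  then show ?thesis by (simp add: power_mono_iff)
qed

lemma vnorm2: "vnorm 2 x = norm x"
  by (simp add: vnorm_def norm_vec_def L2_set_def powr_half_sqrt sum_nonneg)

lemma colnorm_mono:
  assumes "0 < q" "q \<noteq> \<infinity>" "\<And>j. vnorm p (column j M) \<le> vnorm p (column j N)"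
  shows "colnorm p q M \<le> colnorm p q N"
proof -
  have Q: "0 < real_of_ereal q" using rp_pos assms by blast
  show ?thesis unfolding colnorm_def using assms(2) Q
    by (auto intro!: powr_mono2 sum_mono sum_nonneg assms(3) vnorm_nonneg)
qed

lemma colnorm_strict:
  assumes "0 < q" "q \<noteq> \<infinity>" "\<And>j. vnorm p (column j M) \<le> vnorm p (column j N)"
    "vnorm p (column k M) < vnorm p (column k N)"
  shows "colnorm p q M < colnorm p q N"
proof -
  define Q where "Q = real_of_ereal q"
  have Q: "0 < Q" using rp_pos assms Q_def by blast
  have "(\<Sum>j\<in>UNIV. vnorm p (column j M) powr Q) < (\<Sum>j\<in>UNIV. vnorm p (column j N) powr Q)"
  proof (rule sum_strict_mono_ex1)
    show "\<forall>x\<in>UNIV. vnorm p (column x M) powr Q \<le> vnorm p (column x N) powr Q"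
      using Q assms(3) vnorm_nonneg by (auto intro!: powr_mono2)
    show "\<exists>a\<in>UNIV. vnorm p (column a M) powr Q < vnorm p (column a N) powr Q"
      using Q assms(4) vnorm_nonneg by (intro bexI[of _ k]) (auto intro: powr_less_mono2)
  qed simp
  then have "(\<Sum>j\<in>UNIV. vnorm p (column j M) powr Q) powr (1/Q) < (\<Sum>j\<in>UNIV. vnorm p (column j N) powr Q) powr (1/Q)"
    using Q by (intro powr_less_mono2) (auto intro: sum_nonneg)
  then show ?thesis unfolding colnorm_def Q_def using assms(2) by simp
qed


lemma better_exists:
  fixes P :: real
  assumes "0 < P" "P \<noteq> 2"
  shows "\<exists>t. \<bar>1/5 + 2*t\<bar> powr P + \<bar>2/5 - t\<bar> powr P < (1/5) powr P + (2/5) powr P"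
proof -
  define h where "h = (\<lambda>t::real. (1/5 + 2*t) powr P + (2/5 - t) powr P)"
  define l where "l = 2 * (P * (1/5) powr (P-1)) - P * (2/5) powr (P-1)"
  have D: "(h has_real_derivative l) (at 0)"
    unfolding h_def l_def
    by (auto intro!: derivative_eq_intros)
  have e: "(2/5::real) powr (P-1) = 2 powr (P-1) * (1/5) powr (P-1)"
    by (simp add: powr_mult[symmetric])
  have l_eq: "l = P * (1/5) powr (P-1) * (2 - 2 powr (P-1))"
    unfolding l_def e by (simp add: algebra_simps)
  have pos5: "0 < (1/5::real) powr (P-1)" by simp
  have small: "h t < (1/5) powr P + (2/5) powr P \<Longrightarrow> \<bar>t\<bar> \<le> 1/20 \<Longrightarrow> ?thesis" for t
    by (rule exI[of _ t]) (auto simp: h_def abs_of_pos)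
  show ?thesis
  proof (cases "P < 2")
    case True
    have "2 powr (P-1) < 2 powr 1" using True by (intro powr_less_mono) auto
    then have "0 < l" unfolding l_eq using assms pos5 by simp
    then obtain d where d: "d > 0" "\<forall>s>0. s < d \<longrightarrow> h (0 - s) < h 0"
      using DERIV_pos_inc_left[OF D] by blast
    define s where "s = min (d/2) (1/20)"
    have "h (0 - s) < h 0" using d by (simp add: s_def)
    then show ?thesis using d by (intro small[of "-s"]) (auto simp: h_def s_def)
  next
    case False
    then have "2 powr 1 < 2 powr (P-1)" using assms by (intro powr_less_mono) auto
    then have "l < 0" unfolding l_eq using assms pos5 by (simp add: mult_pos_neg)
    then obtain d where d: "d > 0" "\<forall>s>0. s < d \<longrightarrow> h 0 > h (0 + s)"
      using DERIV_neg_dec_right[OF D] by blast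
    define s where "s = min (d/2) (1/20)"
    have "h (0 + s) < h 0" using d by (simp add: s_def)
    then show ?thesis using d by (intro small[of "s"]) (auto simp: h_def s_def)
  qed
qed


lemma column_mult: "column j (X ** A) = X *v column j A"
  by (simp add: vec_eq_iff column_def matrix_matrix_mult_def matrix_vector_mult_def)

lemma matrix_inv_eq:
  fixes D :: "real^'n^'n"
  assumes "D ** Di = mat 1" "Di ** D = mat 1"
  shows "matrix_inv D = Di"
proof -
  have "D ** matrix_inv D = mat 1 \<and> matrix_inv D ** D = mat 1"
    unfolding matrix_inv_def using assms by (intro someI[of "\<lambda>X. D ** X = mat 1 \<and> X ** D = mat 1" Di]) auto
  then have "matrix_inv D = matrix_inv D ** (D ** Di)" using assms by simp
  also have "\<dots> = Di" using \<open>_ \<and> _\<close> by (simp add: matrix_mul_assoc)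
  finally show ?thesis .
qed

lemma vnorm_two:
  fixes v :: "real^'n"
  assumes "a \<noteq> b" "\<And>r. r \<noteq> a \<Longrightarrow> r \<noteq> b \<Longrightarrow> v $ r = 0" "p \<noteq> \<infinity>"
  shows "vnorm p v = (\<bar>v$a\<bar> powr real_of_ereal p + \<bar>v$b\<bar> powr real_of_ereal p) powr (1 / real_of_ereal p)"
proof -
  have "(\<Sum>i\<in>UNIV. \<bar>v $ i\<bar> powr real_of_ereal p) = (\<Sum>i\<in>{a,b}. \<bar>v $ i\<bar> powr real_of_ereal p)"
    by (rule sum.mono_neutral_right) (use assms in auto)
  then show ?thesis using assms unfolding vnorm_def by simp
qed


lemma construction:
  assumes "CARD('m::finite) < CARD('n::finite)"
  shows "\<exists>A :: real^'n^'m. rank A = CARD('m) \<and> (\<forall>p q. 0 < p \<and> p < \<infinity> \<and> 0 < q \<and> q < \<infinity> \<longrightarrow>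
           (pinv A \<in> pginv (colnorm p q) A \<longleftrightarrow> p = 2))"
proof -
  obtain f :: "'m \<Rightarrow> 'n" where inj: "inj f"
    using card_le_inj[of "UNIV::'m set" "UNIV::'n set"] assms by auto
  have "card (range f) = CARD('m)" using inj by (simp add: card_image)
  then have "range f \<noteq> UNIV" using assms by auto
  then obtain k where k: "k \<notin> range f" by auto
  define i0 :: 'm where "i0 = undefined"
  define A :: "real^'n^'m" where "A = (\<chi> i j. (if j = f i then 1 else 0) + (if i = i0 \<and> j = k then 2 else 0))"
  have Af: "A $ i $ f i' = (if i = i' then 1 else 0)" for i i'
    using k inj by (auto simp: A_def inj_eq)
  have Ak: "A $ i $ k = (if i = i0 then 2 else 0)" for i
    using k by (auto simp: A_def)
  have Ao: "j \<notin> range f \<Longrightarrow> j \<noteq> k \<Longrightarrow> A $ i $ j = 0" for i j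
    by (auto simp: A_def)
  define dd :: "real^'m" where "dd = (\<chi> i. if i = i0 then 5 else 1)"
  define D :: "real^'m^'m" where "D = (\<chi> i i'. if i = i' then dd $ i else 0)"
  define Di :: "real^'m^'m" where "Di = (\<chi> i i'. if i = i' then 1 / dd $ i else 0)"
  have ddpos: "0 < dd $ i" for i by (simp add: dd_def)
  have ddne: "dd $ i \<noteq> 0" for i by (simp add: dd_def)
  have AAT: "A ** transpose A = D"
  proof -
    have pt: "A $ i $ j * A $ i' $ j = (if j = f i then (if i = i' then 1 else 0) else 0)
          + (if j = k then (if i = i0 \<and> i' = i0 then 4 else 0) else 0)" for i i' j
      using k inj by (auto simp: A_def inj_eq)
    show ?thesis
      by (simp add: vec_eq_iff matrix_matrix_mult_def transpose_def pt sum.distrib D_def dd_def)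
  qed
  have pt2: "(if i = j then a else 0) * (if j = i' then b else (0::real)) = (if j = i then (if i = i' then a*b else 0) else 0)" for i j i' a b
    by auto
  have DDi: "D ** Di = mat 1" "Di ** D = mat 1"
    by (auto simp: vec_eq_iff matrix_matrix_mult_def D_def Di_def mat_def pt2 ddne)
  have pinvA: "pinv A = transpose A ** Di"
    unfolding pinv_def AAT matrix_inv_eq[OF DDi] ..
  have AP: "A ** pinv A = mat 1"
    unfolding pinvA matrix_mul_assoc AAT by (rule DDi(1))
  have rank: "rank A = CARD('m)"
    using rank_bound[of A] rank_mul_le_left[of A "pinv A"] unfolding AP rank_I by simp
  have Pent: "pinv A $ r $ i = A $ i $ r / dd $ i" for r i
    unfolding pinvA by (simp add: matrix_matrix_mult_def transpose_def Di_def if_distrib sum.delta cong: if_cong)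
  have supp: "A$i$j = (if i = i0 then A$i0$j else 0)" if "A$i0$j \<noteq> 0" for i j
  proof (cases "j \<in> range f")
    case True
    then obtain i' where "j = f i'" by auto
    then show ?thesis using that by (auto simp: Af split: if_splits)
  next
    case False
    then show ?thesis using that Ao by (cases "j = k") (auto simp: Ak)
  qed
  have sumsupp: "(\<Sum>i\<in>UNIV. g i * A$i$j) = g i0 * A$i0$j" if "A$i0$j \<noteq> 0" for g :: "'m \<Rightarrow> real" and j
  proof -
    have "(\<Sum>i\<in>UNIV. g i * A$i$j) = (\<Sum>i\<in>UNIV. if i = i0 then g i0 * A$i0$j else 0)"
    proof (rule sum.cong)
      fix i show "g i * A$i$j = (if i = i0 then g i0 * A$i0$j else 0)"
        using supp[OF that, of i] by (cases "i = i0") simp_all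
    qed simp
    then show ?thesis by simp
  qed
  have if_mult_zero: "(if P then a else 0) * b = (if P then a * b else (0::real))" for P a b by simp
  have mult_if_zero: "b * (if P then a else 0) = (if P then b * a else (0::real))" for P a b by simp
  have sif: "(\<Sum>k\<in>UNIV. if c then g k else (0::real)) = (if c then sum g UNIV else 0)" for c and g :: "'n \<Rightarrow> real"
    by simp
  have fk: "f i0 \<noteq> k" using k by auto
  show ?thesis
  proof (intro exI[of _ A] conjI allI impI rank)
    fix p q :: ereal assume pq: "0 < p \<and> p < \<infinity> \<and> 0 < q \<and> q < \<infinity>"
    then have p: "0 < p" "p \<noteq> \<infinity>" and q: "0 < q" "q \<noteq> \<infinity>" by auto
    have Pg: "pinv A \<in> ginvs A" using AP by (simp add: ginvs_def)
    show "pinv A \<in> pginv (colnorm p q) A \<longleftrightarrow> p = 2"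
    proof
      assume mem: "pinv A \<in> pginv (colnorm p q) A"
      show "p = 2"
      proof (rule ccontr)
        assume p2: "p \<noteq> 2"
        define P where "P = real_of_ereal p"
        have P0: "0 < P" using rp_pos[OF p] P_def by simp
        have P2: "P \<noteq> 2" using p2 p P0 by (cases p) (auto simp: P_def)
        obtain t where t: "\<bar>1/5 + 2*t\<bar> powr P + \<bar>2/5 - t\<bar> powr P < (1/5) powr P + (2/5) powr P"
          using better_exists[OF P0 P2] by blast
        define dv :: "real^'n" where "dv = (\<chi> j. (if j = f i0 then 2 else 0) - (if j = k then 1 else 0))"
        define E :: "real^'m^'n" where "E = (\<chi> r i. if i = i0 then t * dv$r else 0)"
        define Y where "Y = pinv A + E"
        have Adv: "A *v dv = 0"
        proof -
          have pt: "A $ r $ j * dv $ j = (if j = f i0 then (if r = i0 then 2 else 0) else 0)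
             - (if j = k then (if r = i0 then 2 else 0) else 0)" for r j
            using k inj by (auto simp: A_def dv_def inj_eq)
          show ?thesis by (simp add: vec_eq_iff matrix_vector_mult_def pt sum_subtractf)
        qed
        have AE: "A ** E = 0"
        proof -
          have "(\<Sum>j\<in>UNIV. A$r$j * (t * dv$j)) = t * (A *v dv)$r" for r
            by (simp add: matrix_vector_mult_def sum_distrib_left algebra_simps)
          then show ?thesis using Adv
            by (auto simp: vec_eq_iff matrix_matrix_mult_def E_def mult_if_zero sif)
        qed
        have Yg: "Y \<in> ginvs A"
          using AP AE by (simp add: ginvs_def Y_def matrix_add_ldistrib)
        define x :: "real^'n" where "x = (\<chi> r. A$i0$r / 5)"
        define y :: "real^'n" where "y = (\<chi> r. A$i0$r / 5 + t * dv$r)"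
        have Az: "A$i0$r = 0" if "r \<noteq> f i0" "r \<noteq> k" for r
        proof (cases "r \<in> range f")
          case True
          then obtain i' where "r = f i'" by auto
          then show ?thesis using that by (auto simp: Af split: if_splits)
        qed (use Ao that in auto)
        have xy: "vnorm p y < vnorm p x"
        proof -
          have vy: "vnorm p y = (\<bar>1/5 + t*2\<bar> powr P + \<bar>2/5 - t\<bar> powr P) powr (1/P)"
            using vnorm_two[OF fk, of y p] p(2) fk Az
            by (simp add: y_def dv_def Af Ak P_def)
          have vx: "vnorm p x = ((1/5) powr P + (2/5) powr P) powr (1/P)"
            using vnorm_two[OF fk, of x p] p(2) fk Az
            by (simp add: x_def Af Ak P_def)
          show ?thesis unfolding vx vy using t P0 by (intro powr_less_mono2) (auto simp: mult.commute)
        qed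
        have colP: "column j (pinv A ** A) = A$i0$j *s x" if "A$i0$j \<noteq> 0" for j
        proof -
          have "column j (pinv A ** A) $ r = (A $ i0 $ j *s x) $ r" for r
          proof -
            have "column j (pinv A ** A) $ r = (\<Sum>i\<in>UNIV. pinv A $ r $ i * A $ i $ j)"
              by (simp add: column_def matrix_matrix_mult_def)
            also have "\<dots> = pinv A $ r $ i0 * A $ i0 $ j" by (rule sumsupp[OF that])
            also have "\<dots> = (A $ i0 $ j *s x) $ r" by (simp add: Pent dd_def x_def)
            finally show ?thesis .
          qed
          then show ?thesis by (simp add: vec_eq_iff)
        qed
        have colY: "column j (Y ** A) = A$i0$j *s y" if "A$i0$j \<noteq> 0" for j
        proof -
          have "column j (Y ** A) $ r = (A $ i0 $ j *s y) $ r" for r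
          proof -
            have "column j (Y ** A) $ r = (\<Sum>i\<in>UNIV. Y $ r $ i * A $ i $ j)"
              by (simp add: column_def matrix_matrix_mult_def)
            also have "\<dots> = Y $ r $ i0 * A $ i0 $ j" by (rule sumsupp[OF that])
            also have "\<dots> = (A $ i0 $ j *s y) $ r" by (simp add: Y_def E_def Pent dd_def y_def algebra_simps)
            finally show ?thesis .
          qed
          then show ?thesis by (simp add: vec_eq_iff)
        qed
        have colE: "column j (Y ** A) = column j (pinv A ** A)" if "A$i0$j = 0" for j
          using that by (simp add: vec_eq_iff column_def matrix_matrix_mult_def Y_def E_def distrib_right sum.distrib if_mult_zero)
        have le: "vnorm p (column j (Y ** A)) \<le> vnorm p (column j (pinv A ** A))" for j
        proof (cases "A$i0$j = 0")
          case True then show ?thesis by (simp add: colE)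
        next
          case False then show ?thesis using xy p(1)
            by (simp add: colP colY vnorm_scale mult_left_mono)
        qed
        have lt: "vnorm p (column k (Y ** A)) < vnorm p (column k (pinv A ** A))"
          using xy p(1) by (simp add: colP colY vnorm_scale Ak)
        have "colnorm p q (Y ** A) < colnorm p q (pinv A ** A)"
          by (rule colnorm_strict[OF q le lt])
        with mem Yg show False by (auto simp: pginv_def dest: bspec[of _ _ Y])
      qed
    next
      assume p2: "p = 2"
      show "pinv A \<in> pginv (colnorm p q) A"
        unfolding pginv_def
      proof (intro CollectI conjI Pg ballI)
        fix Y assume Y: "Y \<in> ginvs A"
        show "colnorm p q (pinv A ** A) \<le> colnorm p q (Y ** A)"
        proof (rule colnorm_mono[OF q])
          fix j
          have "A *v (Y *v column j A) = column j A"
            using Y by (simp add: ginvs_def matrix_vector_mul_assoc)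
          then have "norm (pinv A *v column j A) \<le> norm (Y *v column j A)"
            by (intro min_norm[OF AP, of "matrix_inv (A ** transpose A)"]) (simp_all add: pinv_def)
          then show "vnorm p (column j (pinv A ** A)) \<le> vnorm p (column j (Y ** A))"
            unfolding p2 column_mult vnorm2 .
        qed
      qed
    qed
  qed
qed


theorem theorem4:
  assumes "CARD('m::finite) < CARD('n::finite)"
  shows "(CARD('m) = 1 \<longrightarrow>
            (\<forall>(A :: real^'n^'m) p q. 0 < p \<and> 0 < q \<longrightarrow>
               pginv (colnorm p q) A = ginv (entnorm p) A)
          \<and> (\<exists>A1 :: real^'n^'m. rank A1 = CARD('m) \<and>
               (\<forall>p q. 0 < p \<and> p < \<infinity> \<and> 0 < q \<longrightarrow>
                  (pinv A1 \<in> pginv (colnorm p q) A1 \<longleftrightarrow> p = 2))))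
       \<and> (2 \<le> CARD('m) \<longrightarrow>
            (\<exists>A4 :: real^'n^'m. rank A4 = CARD('m) \<and>
               (\<forall>p q. 1 \<le> p \<and> p < \<infinity> \<and> 0 < q \<and> q < \<infinity> \<longrightarrow>
                  (pinv A4 \<in> pginv (colnorm p q) A4 \<longleftrightarrow> p = 2))))"
proof -
  obtain A :: "real^'n^'m" where rk: "rank A = CARD('m)" and
    H: "\<And>p q. 0 < p \<Longrightarrow> p < \<infinity> \<Longrightarrow> 0 < q \<Longrightarrow> q < \<infinity> \<Longrightarrow>
           (pinv A \<in> pginv (colnorm p q) A \<longleftrightarrow> p = 2)"
    using construction[OF assms] by blast
  have part1: "CARD('m) = 1 \<longrightarrow>
            (\<forall>(A :: real^'n^'m) p q. 0 < p \<and> 0 < q \<longrightarrow>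
               pginv (colnorm p q) A = ginv (entnorm p) A)
          \<and> (\<exists>A1 :: real^'n^'m. rank A1 = CARD('m) \<and>
               (\<forall>p q. 0 < p \<and> p < \<infinity> \<and> 0 < q \<longrightarrow>
                  (pinv A1 \<in> pginv (colnorm p q) A1 \<longleftrightarrow> p = 2)))"
  proof (intro impI conjI allI)
    assume c: "CARD('m) = 1"
    show "pginv (colnorm p q) B = ginv (entnorm p) B" if "0 < p \<and> 0 < q" for B :: "real^'n^'m" and p q
      using part_a[OF c] that by blast
    show "\<exists>A1 :: real^'n^'m. rank A1 = CARD('m) \<and>
               (\<forall>p q. 0 < p \<and> p < \<infinity> \<and> 0 < q \<longrightarrow>
                  (pinv A1 \<in> pginv (colnorm p q) A1 \<longleftrightarrow> p = 2))"
    proof (intro exI[of _ A] conjI rk allI impI)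
      fix p q :: ereal assume pq: "0 < p \<and> p < \<infinity> \<and> 0 < q"
      have "pginv (colnorm p q) A = pginv (colnorm p 1) A"
        using part_a[OF c, of p q A] part_a[OF c, of p 1 A] pq by simp
      then show "pinv A \<in> pginv (colnorm p q) A \<longleftrightarrow> p = 2"
        using H[of p 1] pq by simp
    qed
  qed
  have part2: "2 \<le> CARD('m) \<longrightarrow>
            (\<exists>A4 :: real^'n^'m. rank A4 = CARD('m) \<and>
               (\<forall>p q. 1 \<le> p \<and> p < \<infinity> \<and> 0 < q \<and> q < \<infinity> \<longrightarrow>
                  (pinv A4 \<in> pginv (colnorm p q) A4 \<longleftrightarrow> p = 2)))"
  proof (intro impI exI[of _ A] conjI rk allI impI)
    fix p q :: ereal
    assume pq: "1 \<le> p \<and> p < \<infinity> \<and> 0 < q \<and> q < \<infinity>"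
    then have "0 < p" using order.strict_trans2[of 0 1 p] by simp
    then show "pinv A \<in> pginv (colnorm p q) A \<longleftrightarrow> p = 2" using H pq by blast
  qed
  show ?thesis using part1 part2 by blast
qed

end
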